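(* Let $2/5 < r < 1$, put $p = \left\lceil \frac{5r-2}{1-r} \right\rceil$ and $\alpha = p - \frac{5r-2}{1-r}$, and let $\alpha = (0.\alpha_1 \alpha_2 \cdots)_2$ be the binary expansion of $\alpha$ with infinitely many zero digits. Define binary words $w^{\langle 0 \rangle} = \emptyset$ and $w^{\langle i \rangle} = w^{\langle i-1 \rangle} w^{\langle i-1 \rangle}\, 01011\, 0^{p - \alpha_i}$ for $i \geq 1$; each $w^{\langle i \rangle}$ is a proper prefix of $w^{\langle i+1 \rangle}$, and let $w$ be the infinite binary word which is the limit of this sequence. Then $\lim_{n \to \infty} |P(w^{(n)})|/n = (5r-2)/3$.
   Context: For a binary word $x$, $x^j$ denotes $j$ concatenated copies of $x$ ($x^0$ is empty), and juxtaposition denotes concatenation. $w^{(n)}$ denotes the initial subword of length $n$ of $w$. For a binary word $u = u_1 \cdots u_\ell$ of length $\ell$, $P(u)$ is the set of indices $i \geq 2$ such that at least one of the following holds: (i) $\ell \geq i$ and $u_{i-1} u_i = 00$; (ii) $\ell \geq i+2$ and $u_{i-1} u_i u_{i+1} u_{i+2} = 0100$; (iii) $\ell \geq i+3$ and $u_{i-1} \cdots u_{i+3} = 01010$. *)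

theory Defs
  imports Complex_Main
begin

text \<open>Binary words are lists over nat with letters 0 and 1.
  The letter u_j (1-indexed) of a word u is u ! (j - 1).\<close>

definition letter :: "nat list \<Rightarrow> nat \<Rightarrow> nat" where
  "letter u j = u ! (j - 1)"

definition Pset :: "nat list \<Rightarrow> nat set" where
  "Pset u = {i. 2 \<le> i \<and>
     ((length u \<ge> i \<and> letter u (i-1) = 0 \<and> letter u i = 0) \<or>
      (length u \<ge> i + 2 \<and> letter u (i-1) = 0 \<and> letter u i = 1 \<and>
         letter u (i+1) = 0 \<and> letter u (i+2) = 0) \<or>
      (length u \<ge> i + 3 \<and> letter u (i-1) = 0 \<and> letter u i = 1 \<and>
         letter u (i+1) = 0 \<and> letter u (i+2) = 1 \<and> letter u (i+3) = 0))}"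

definition p_of :: "real \<Rightarrow> int" where
  "p_of r = \<lceil>(5*r - 2) / (1 - r)\<rceil>"

definition alpha_of :: "real \<Rightarrow> real" where
  "alpha_of r = real_of_int (p_of r) - (5*r - 2) / (1 - r)"

text \<open>i-th binary digit (i \<ge> 1) of the expansion of alpha in [0,1) with
  infinitely many zero digits (the greedy expansion).\<close>
definition alpha_digit :: "real \<Rightarrow> nat \<Rightarrow> nat" where
  "alpha_digit r i = nat (\<lfloor>2 ^ i * alpha_of r\<rfloor> mod 2)"

fun wblock :: "real \<Rightarrow> nat \<Rightarrow> nat list" where
  "wblock r 0 = []"
| "wblock r (Suc i) = wblock r i @ wblock r i @ [0,1,0,1,1] @
     replicate (nat (p_of r - int (alpha_digit r (Suc i)))) 0"

text \<open>The limit infinite word: letter n (0-indexed) read off from w<n+1>,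
  whose length is at least 5 (2^(n+1) - 1) > n.\<close>
definition wlim :: "real \<Rightarrow> nat \<Rightarrow> nat" where
  "wlim r n = wblock r (Suc n) ! n"

definition wprefix :: "real \<Rightarrow> nat \<Rightarrow> nat list" where
  "wprefix r n = map (wlim r) [0..<n]"

end

theory Submission
  imports Defs "HOL-Real_Asymp.Real_Asymp"
begin


fun zc :: "nat list \<Rightarrow> nat" where
  "zc [] = 0"
| "zc [a] = (if a = 0 then 1 else 0)"
| "zc (a#b#t) = (if a = 0 \<and> b = 0 then 1 else 0) + zc (b#t)"

lemma zc_append: "v = [] \<or> hd v = 0 \<Longrightarrow> zc (u @ v) = zc u + zc v"
proof (induction u rule: zc.induct)
  case (2 a)
  then show ?case by (cases v) auto
qed auto

lemma zc_le: "zc u \<le> length u"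
  by (induction u rule: zc.induct) auto

lemma zc_rep: "zc (replicate k 0) = k"
proof (induction k)
  case (Suc k)
  have "zc (replicate (Suc k) 0) = zc ([0] @ replicate k 0)" by simp
  also have "\<dots> = 1 + k" using Suc by (subst zc_append) (cases k, auto)
  finally show ?case by simp
qed simp

definition S :: "nat list \<Rightarrow> nat set" where
  "S v = {i. 2 \<le> i \<and> i \<le> length v \<and> v!(i-2) = 0 \<and> v!(i-1) = 0}"

lemma S_cons2: "S (a#b#t) = (if a = 0 \<and> b = 0 then {2} else {}) \<union> Suc ` S (b#t)"
proof -
  have "x \<in> S (a#b#t) \<longleftrightarrow> x \<in> (if a = 0 \<and> b = 0 then {2} else {}) \<union> Suc ` S (b#t)" for x
  proof (cases "x \<le> 2")
    case True
    then show ?thesis unfolding S_def by (auto simp: image_iff)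
  next
    case False
    then obtain y where y: "x = Suc y" "y \<ge> 2" by (metis Suc_le_D not_less_eq_eq numeral_2_eq_2 Suc_leI le_SucE)
    then show ?thesis unfolding S_def using False
      by (auto simp: image_iff nth_Cons' numeral_3_eq_3 split: if_splits)
  qed
  then show ?thesis by blast
qed

lemma S_fin: "finite (S v)" unfolding S_def by (rule finite_subset[of _ "{..length v}"]) auto

lemma S_card: "zc v = card (S v) + (if v \<noteq> [] \<and> last v = 0 then 1 else 0)"
proof (induction v rule: zc.induct)
  case 1 then show ?case by (simp add: S_def)
next
  case (2 a) then show ?case by (simp add: S_def)
next
  case (3 a b t)
  have d: "2 \<notin> Suc ` S (b#t)" by (auto simp: S_def)
  have "card (S (a#b#t)) = (if a = 0 \<and> b = 0 then 1 else 0) + card (S (b#t))"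
    unfolding S_cons2 using d S_fin[of "b#t"]
    by (cases "a = 0 \<and> b = 0") (auto simp: card_image card_insert_if)
  then show ?case using 3 by simp
qed

inductive G :: "nat list \<Rightarrow> bool" where
  G0: "G []"
| GS: "G u \<Longrightarrow> G ([0,1,0,1,1] @ replicate k 0 @ u)"

lemma G_append: "G u \<Longrightarrow> G v \<Longrightarrow> G (u @ v)"
proof (induction u rule: G.induct)
  case (GS u k) then show ?case using G.GS[of "u@v" k] by simp
qed simp

definition Q :: "nat list \<Rightarrow> bool" where
  "Q U \<longleftrightarrow> (\<forall>j. j+3 < length U \<longrightarrow> U!j = 0 \<longrightarrow> U!(j+1) = 1 \<longrightarrow> U!(j+2) = 0 \<longrightarrow>
      U!(j+3) = 1 \<and> (j+4 < length U \<longrightarrow> U!(j+4) = 1))"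

lemma G_Q: "G u \<Longrightarrow> Q u \<and> (u = [] \<or> hd u = 0)"
proof (induction u rule: G.induct)
  case G0
  then show ?case by (simp add: Q_def)
next
  case (GS v k)
  let ?u = "[0,1,0,1,1] @ replicate k 0 @ v"
  have nth: "?u ! i = (if i < 5 then [0,1,0,1,1] ! i else if i < 5 + k then 0 else v ! (i - (5+k)))" for i
  proof (cases "i < 5")
    case True
    then have "i = 0 \<or> i = 1 \<or> i = 2 \<or> i = 3 \<or> i = 4" by auto
    then show ?thesis by auto
  next
    case False
    then obtain m where m: "i = 5 + m" by (metis le_Suc_ex not_less)
    have "?u ! i = (replicate k 0 @ v) ! m" unfolding m by (simp add: nth_append)
    also have "\<dots> = (if m < k then 0 else v ! (m - k))" by (simp add: nth_append)
    finally show ?thesis unfolding m by simp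
  qed
  have "Q ?u"
    unfolding Q_def
  proof (intro allI impI)
    fix j
    assume l: "j + 3 < length ?u" and a0: "?u ! j = 0" and a1: "?u ! (j+1) = 1" and a2: "?u ! (j+2) = 0"
    show "?u ! (j+3) = 1 \<and> (j + 4 < length ?u \<longrightarrow> ?u ! (j+4) = 1)"
    proof (cases "j \<ge> 5 + k")
      case True
      define j' where "j' = j - (5+k)"
      have e: "?u ! (j + t) = v ! (j' + t)" for t
      proof -
        have jt: "j + t = length ([0,1,0,1,1] @ replicate k (0::nat)) + (j'+t)" using True by (simp add: j'_def)
        show ?thesis unfolding jt by (subst append_assoc[symmetric], subst nth_append_length_plus, rule refl)
      qed
      have "Q v" using GS by simp
      have lu: "length ?u = 5 + k + length v" by simp
      have jj: "j = 5 + k + j'" using True by (simp add: j'_def)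
      have b0: "v!j' = 0" using a0 e[of 0] by (metis add_0_right)
      have b1: "v!(j'+1) = 1" using a1 e[of 1] by metis
      have b2: "v!(j'+2) = 0" using a2 e[of 2] by metis
      have b3: "j'+3 < length v" using l lu jj by linarith
      have "v!(j'+3) = 1 \<and> (j'+4 < length v \<longrightarrow> v!(j'+4) = 1)"
        using \<open>Q v\<close> b0 b1 b2 b3 unfolding Q_def by blast
      moreover have "j + 4 < length ?u \<longleftrightarrow> j'+4 < length v" using lu jj by linarith
      ultimately show ?thesis using e[of 3] e[of 4] by simp
    next
      case False
      show ?thesis
      proof (cases "j < 5")
        case True
        then have "j = 0 \<or> j = 1 \<or> j = 2 \<or> j = 3 \<or> j = 4" by auto
        then show ?thesis using a0 a1 a2 by (auto simp: nth)
      next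
        case F2: False
        have "?u ! (j+1) = 0"
        proof (cases "j + 1 < 5 + k")
          case True then show ?thesis using F2 by (subst nth) simp
        next
          case False
          then have "j + 1 = 5 + k" using \<open>\<not> j \<ge> 5 + k\<close> by simp
          moreover have "v \<noteq> []" using l \<open>j + 1 = 5 + k\<close> by auto
          ultimately show ?thesis using GS by (subst nth) (simp add: hd_conv_nth)
        qed
        then show ?thesis using a1 by simp
      qed
    qed
  qed
  then show ?case by simp
qed

lemma Pset_S: assumes "Q U" "n \<le> length U" shows "Pset (take n U) = S (take n U)"
proof -
  have "i \<in> Pset (take n U) \<longleftrightarrow> i \<in> S (take n U)" for i
  proof
    assume "i \<in> S (take n U)" then show "i \<in> Pset (take n U)"
      unfolding S_def Pset_def letter_def by (auto simp: numeral_2_eq_2)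
  next
    assume i: "i \<in> Pset (take n U)"
    then obtain j where ij: "i = Suc (Suc j)" unfolding Pset_def by (auto dest!: le_Suc_ex simp: numeral_2_eq_2)
    have Qj: "U!Suc (Suc (Suc j)) = 1 \<and> (Suc (Suc (Suc (Suc j))) < length U \<longrightarrow> U!Suc (Suc (Suc (Suc j))) = 1)"
      if "Suc (Suc (Suc j)) < length U" "U!j=0" "U!Suc j=1" "U!Suc (Suc j)=0"
      using assms(1) that unfolding Q_def
      by (metis add_Suc_right add_0_right numeral_3_eq_3 numeral_2_eq_2 Suc_numeral semiring_norm(2) semiring_norm(8) One_nat_def add_Suc_shift)
    have lt: "length (take n U) = n" using assms(2) by simp
    have tk: "k < n \<Longrightarrow> take n U ! k = U ! k" for k by simp
    have D: "(Suc (Suc j) \<le> n \<and> take n U!j=0 \<and> take n U!Suc j = 0) \<or>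
      (Suc (Suc (Suc (Suc j))) \<le> n \<and> take n U!j=0 \<and> take n U!Suc j = 1 \<and> take n U!Suc (Suc j) = 0 \<and> take n U!Suc (Suc (Suc j)) = 0) \<or>
      (Suc (Suc (Suc (Suc (Suc j)))) \<le> n \<and> take n U!j=0 \<and> take n U!Suc j = 1 \<and> take n U!Suc (Suc j) = 0 \<and> take n U!Suc (Suc (Suc j)) = 1 \<and> take n U!Suc (Suc (Suc (Suc j))) = 0)"
      using i unfolding Pset_def letter_def ij lt by (simp add: numeral_2_eq_2 numeral_3_eq_3)
    have "Suc (Suc j) \<le> n \<and> U!j=0 \<and> U!Suc j = 0"
    proof -
      consider (a) "Suc (Suc j) \<le> n \<and> take n U!j=0 \<and> take n U!Suc j = 0"
        | (b) "Suc (Suc (Suc (Suc j))) \<le> n \<and> take n U!j=0 \<and> take n U!Suc j = 1 \<and> take n U!Suc (Suc j) = 0 \<and> take n U!Suc (Suc (Suc j)) = 0"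
        | (c) "Suc (Suc (Suc (Suc (Suc j)))) \<le> n \<and> take n U!j=0 \<and> take n U!Suc j = 1 \<and> take n U!Suc (Suc j) = 0 \<and> take n U!Suc (Suc (Suc j)) = 1 \<and> take n U!Suc (Suc (Suc (Suc j))) = 0"
        using D by blast
      then show ?thesis
      proof cases
        case a
        then have "j < n" "Suc j < n" by auto
        with a show ?thesis by (simp add: tk)
      next
        case b
        then have "j < n" "Suc j < n" "Suc (Suc j) < n" "Suc (Suc (Suc j)) < n" by auto
        with b have "U!j=0" "U!Suc j = 1" "U!Suc (Suc j) = 0" "U!Suc (Suc (Suc j)) = 0" "Suc (Suc (Suc j)) < length U"
          using assms(2) by (simp_all add: tk)
        then show ?thesis using Qj by simp
      next
        case c
        then have "j < n" "Suc j < n" "Suc (Suc j) < n" "Suc (Suc (Suc j)) < n" "Suc (Suc (Suc (Suc j))) < n" by auto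
        with c have "U!j=0" "U!Suc j = 1" "U!Suc (Suc j) = 0" "U!Suc (Suc (Suc (Suc j))) = 0" "Suc (Suc (Suc (Suc j))) < length U"
          using assms(2) by (simp_all add: tk)
        then show ?thesis using Qj by simp
      qed
    qed
    then show "i \<in> S (take n U)" unfolding S_def ij using assms(2) by auto
  qed
  then show ?thesis by blast
qed




lemma wblock_Suc': "wblock r (Suc i) = wblock r i @ wblock r i @ ([0,1,0,1,1] @ replicate (nat (p_of r - int (alpha_digit r (Suc i)))) 0)"
  by simp

lemma wblock_G: "G (wblock r i)"
proof (induction i)
  case 0 then show ?case by (simp add: G0)
next
  case (Suc i)
  have "G ([0,1,0,1,1] @ replicate (nat (p_of r - int (alpha_digit r (Suc i)))) 0 @ [])"
    by (rule GS[OF G0])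
  then show ?case using Suc by (simp only: wblock_Suc' G_append append_Nil2)
qed

lemma wblock_hd: "wblock r i = [] \<or> hd (wblock r i) = 0"
  using G_Q[OF wblock_G[of r i]] by (rule conjunct2)

lemma wblock_prefix: "i \<le> j \<Longrightarrow> \<exists>t. wblock r j = wblock r i @ t"
proof (induction j rule: dec_induct)
  case base then show ?case by simp
next
  case (step j)
  then obtain t where "wblock r j = wblock r i @ t" by blast
  then show ?case by simp
qed

lemma wblock_len_ge: "n \<le> length (wblock r n)"
  by (induction n) auto

lemma wblock_len_pow: "2 ^ i \<le> length (wblock r i) + 1"
  by (induction i) auto

lemma wprefix_take: assumes "n \<le> length (wblock r i)" shows "wprefix r n = take n (wblock r i)"
proof (rule nth_equalityI)
  show "length (wprefix r n) = length (take n (wblock r i))" using assms by (simp add: wprefix_def)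
next
  fix j assume "j < length (wprefix r n)"
  then have j: "j < n" by (simp add: wprefix_def)
  define M where "M = max (Suc j) i"
  obtain t1 where t1: "wblock r M = wblock r (Suc j) @ t1" using wblock_prefix[of "Suc j" M r] by (auto simp: M_def)
  obtain t2 where t2: "wblock r M = wblock r i @ t2" using wblock_prefix[of i M r] by (auto simp: M_def)
  have l1: "j < length (wblock r (Suc j))" using wblock_len_ge[of "Suc j" r] by simp
  have l2: "j < length (wblock r i)" using j assms by simp
  have "wlim r j = wblock r M ! j" unfolding wlim_def t1 using l1 by (metis nth_append)
  also have "\<dots> = wblock r i ! j" unfolding t2 using l2 by (metis nth_append)
  finally show "wprefix r n ! j = take n (wblock r i) ! j" using j by (simp add: wprefix_def)
qed

definition gg :: "real \<Rightarrow> nat list \<Rightarrow> real" where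
  "gg s u = (5 + s) * real (zc u) - s * real (length u)"

lemma gg_append: "v = [] \<or> hd v = 0 \<Longrightarrow> gg s (u @ v) = gg s u + gg s v"
  by (simp add: gg_def zc_append algebra_simps)

lemma gg_bound: assumes "s \<ge> 0" shows "\<bar>gg s u\<bar> \<le> (5 + 2*s) * real (length u)"
proof -
  have "real (zc u) \<le> real (length u)" using zc_le by simp
  moreover have "0 \<le> real (zc u)" by simp
  ultimately have "(5 + s) * real (zc u) \<le> (5 + s) * real (length u)" "s * real (length u) \<ge> 0"
    using assms by (auto intro: mult_left_mono)
  moreover have "(5 + s) * real (zc u) \<ge> 0" using assms by simp
  ultimately show ?thesis unfolding gg_def by (simp add: abs_le_iff algebra_simps)
qed

lemma zc_T: "zc ([0,1,0,1,1] @ replicate k 0) = k"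
proof -
  have "replicate k (0::nat) = [] \<or> hd (replicate k (0::nat)) = 0" by (cases k) auto
  then have "zc ([0,1,0,1,1] @ replicate k 0) = zc [0,1,0,1,1] + zc (replicate k 0)" by (rule zc_append)
  then show ?thesis by (simp add: zc_rep)
qed




lemma frac_step:
  fixes x :: real
  shows "2 * x - of_int \<lfloor>2 * x\<rfloor> = 2 * (x - of_int \<lfloor>x\<rfloor>) - real (nat (\<lfloor>2 * x\<rfloor> mod 2))"
proof -
  define a where "a = \<lfloor>x\<rfloor>"
  define f where "f = x - of_int a"
  have f: "0 \<le> f" "f < 1" unfolding f_def a_def by linarith+
  have x: "2 * x = 2 * f + of_int (2 * a)" unfolding f_def by simp
  define b where "b = \<lfloor>2 * f\<rfloor>"
  have b: "b = 0 \<or> b = 1" unfolding b_def using f by linarith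
  have fl: "\<lfloor>2 * x\<rfloor> = b + 2 * a" unfolding x b_def by (rule floor_add_int[symmetric])
  have m: "\<lfloor>2 * x\<rfloor> mod 2 = b" unfolding fl using b by auto
  have rb: "real (nat b) = of_int b" using b by auto
  have "2 * x - of_int \<lfloor>2 * x\<rfloor> = 2 * f - of_int b" unfolding fl x by (simp add: b_def)
  also have "\<dots> = 2 * (x - of_int \<lfloor>x\<rfloor>) - real (nat (\<lfloor>2 * x\<rfloor> mod 2))"
    unfolding m rb f_def a_def by simp
  finally show ?thesis .
qed

locale R =
  fixes r :: real
  assumes r1: "2/5 < r" and r2: "r < 1"
begin

definition "s = (5*r - 2) / (1 - r)"

lemma s_pos: "s > 0" unfolding s_def using r1 r2 by simp

lemma p_ge: "p_of r \<ge> 1"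
proof -
  have "(5*r - 2) / (1 - r) > 0" using s_pos s_def by simp
  then show ?thesis unfolding p_of_def by linarith
qed

lemma alpha_bnd: "0 \<le> alpha_of r" "alpha_of r < 1"
  unfolding alpha_of_def p_of_def by linarith+

lemma alpha_eq: "alpha_of r = real_of_int (p_of r) - s"
  unfolding alpha_of_def s_def by simp

lemma digit_le: "alpha_digit r i \<le> 1"
  unfolding alpha_digit_def by auto

definition "kk i = nat (p_of r - int (alpha_digit r i))"

lemma kk_real: "real (kk i) = real_of_int (p_of r) - real (alpha_digit r i)"
  unfolding kk_def using p_ge digit_le[of i] by simp

lemma kk_le: "real (kk i) \<le> real_of_int (p_of r)"
  using kk_real by simp

definition "F i = 2^i * alpha_of r - of_int \<lfloor>2^i * alpha_of r\<rfloor>"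

lemma F_step: "F (Suc i) = 2 * F i - real (alpha_digit r (Suc i))"
  unfolding F_def alpha_digit_def using frac_step[of "2^i * alpha_of r"] by (simp add: mult.assoc)

lemma F_bnd: "0 \<le> F i" "F i < 1" unfolding F_def by linarith+

lemma gg_T: "gg s ([0,1,0,1,1] @ replicate (kk i) 0) = 5 * (alpha_of r - real (alpha_digit r i))"
  unfolding gg_def zc_T using kk_real[of i] alpha_eq by (simp add: algebra_simps)

lemma gg_W: "gg s (wblock r i) = 5 * (F i - alpha_of r)"
proof (induction i)
  case 0
  have "\<lfloor>alpha_of r\<rfloor> = 0" using alpha_bnd by linarith
  then show ?case by (simp add: gg_def F_def)
next
  case (Suc i)
  let ?W = "wblock r i" and ?T = "[0,1,0,1,1] @ replicate (kk (Suc i)) (0::nat)"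
  have e: "wblock r (Suc i) = ?W @ (?W @ ?T)" by (simp add: kk_def)
  have h1: "?W @ ?T = [] \<or> hd (?W @ ?T) = 0" using wblock_hd[of r i] by (cases ?W) auto
  have "gg s (wblock r (Suc i)) = gg s ?W + (gg s ?W + gg s ?T)"
    unfolding e gg_append[OF h1] using gg_append[of ?T s ?W] by simp
  then show ?case unfolding gg_T Suc F_step by (simp add: algebra_simps)
qed

lemma gg_W_bnd: "\<bar>gg s (wblock r i)\<bar> \<le> 5"
  using gg_W[of i] F_bnd[of i] alpha_bnd by (simp add: abs_le_iff)

definition "K = 10 + (5 + 2*s) * (5 + real_of_int (p_of r))"

lemma key: "m \<le> length (wblock r i) \<Longrightarrow> \<bar>gg s (take m (wblock r i))\<bar> \<le> K * real i"
proof (induction i arbitrary: m)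
  case 0 then show ?case by (simp add: gg_def)
next
  case (Suc i)
  let ?W = "wblock r i" and ?T = "[0,1,0,1,1] @ replicate (kk (Suc i)) (0::nat)"
  let ?L = "length ?W"
  have e: "wblock r (Suc i) = ?W @ (?W @ ?T)" by (simp add: kk_def)
  have Kpos: "K \<ge> 10" unfolding K_def using s_pos p_ge by simp
  have IH: "\<bar>gg s (take m' ?W)\<bar> \<le> K * real i" if "m' \<le> ?L" for m' using Suc.IH that by simp
  have hdt: "take m' ?W = [] \<or> hd (take m' ?W) = 0" for m'
    using wblock_hd[of r i] by (cases ?W; cases m') auto
  consider (a) "m \<le> ?L" | (b) "?L < m" "m \<le> 2 * ?L" | (c) "2 * ?L < m" by linarith
  then show ?case
  proof cases
    case a
    then have "m - ?L = 0" by simp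
    then have h: "take m (wblock r (Suc i)) = take m ?W" unfolding e by (subst take_append) simp
    show ?thesis unfolding h using IH[OF a] Kpos by (simp add: algebra_simps)
  next
    case b
    then have "take m (wblock r (Suc i)) = ?W @ take (m - ?L) ?W" unfolding e by simp
    then have "gg s (take m (wblock r (Suc i))) = gg s ?W + gg s (take (m - ?L) ?W)"
      using gg_append[OF hdt] by simp
    moreover have "\<bar>gg s (take (m - ?L) ?W)\<bar> \<le> K * real i" using IH b by simp
    ultimately show ?thesis using gg_W_bnd[of i] Kpos by (simp add: algebra_simps)
  next
    case c
    let ?t = "take (m - 2 * ?L) ?T"
    have tk: "take m (wblock r (Suc i)) = ?W @ ?W @ ?t" unfolding e using c by (simp add: mult_2)
    have hT: "?t = [] \<or> hd ?t = 0" by (cases "m - 2 * ?L") auto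
    have hW: "?W @ ?t = [] \<or> hd (?W @ ?t) = 0" using wblock_hd[of r i] hT by (cases ?W) auto
    have g: "gg s (take m (wblock r (Suc i))) = gg s ?W + gg s ?W + gg s ?t"
      unfolding tk gg_append[OF hW] gg_append[OF hT] by simp
    have "real (length ?t) \<le> 5 + real_of_int (p_of r)" using kk_le[of "Suc i"] by simp
    then have B: "(5 + 2*s) * real (length ?t) \<le> (5 + 2*s) * (5 + real_of_int (p_of r))"
      using s_pos by (intro mult_left_mono) auto
    have A: "\<bar>gg s ?t\<bar> \<le> (5 + 2*s) * real (length ?t)" by (rule gg_bound) (use s_pos in simp)
    have "\<bar>gg s ?t\<bar> \<le> K - 10" using A B unfolding K_def by linarith
    then have "\<bar>gg s ?W + gg s ?W + gg s ?t\<bar> \<le> K" using gg_W_bnd[of i] unfolding abs_le_iff by linarith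
    moreover have "K \<le> K * real (Suc i)" using Kpos by simp
    ultimately show ?thesis unfolding g by linarith
  qed
qed

end




context R begin

lemma d_eq: "(5*r - 2) / 3 = s / (5 + s)"
proof -
  have "5 + s = 3 / (1 - r)" unfolding s_def using r2 by (simp add: field_simps)
  then show ?thesis unfolding s_def using r2 by (simp add: field_simps)
qed

lemma bound:
  assumes n: "n \<ge> 1"
  shows "\<bar>real (card (Pset (wprefix r n))) / real n - s / (5 + s)\<bar> \<le> (K * (log 2 (real n) + 1) + 1) / real n"
proof -
  define i where "i = (LEAST i. n \<le> length (wblock r i))"
  have hn: "n \<le> length (wblock r i)" unfolding i_def by (rule LeastI[of _ n]) (rule wblock_len_ge)
  have i0: "i \<noteq> 0" using hn n by (cases i) auto
  have "\<not> n \<le> length (wblock r (i - 1))" unfolding i_def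
    by (rule not_less_Least) (use i0 in \<open>simp add: i_def\<close>)
  then have "2 ^ (i - 1) \<le> n" using wblock_len_pow[of "i-1" r] by linarith
  then have "real (i - 1) \<le> log 2 (real n)" by (rule le_log2_of_power)
  then have ilog: "real i \<le> log 2 (real n) + 1" using i0 by linarith
  define u where "u = take n (wblock r i)"
  have wp: "wprefix r n = u" unfolding u_def by (rule wprefix_take[OF hn])
  have Q: "Q (wblock r i)" using G_Q[OF wblock_G[of r i]] by (rule conjunct1)
  have PS: "Pset u = S u" unfolding u_def by (rule Pset_S[OF Q hn])
  have lu: "length u = n" unfolding u_def using hn by simp
  define c where "c = card (Pset (wprefix r n))"
  define \<delta> where "\<delta> = (if u \<noteq> [] \<and> last u = 0 then 1 else 0 :: nat)"
  have zc: "zc u = c + \<delta>" unfolding c_def wp PS \<delta>_def by (rule S_card)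
  have gg: "\<bar>gg s u\<bar> \<le> K * real i" unfolding u_def by (rule key[OF hn])
  have spos: "s > 0" by (rule s_pos)
  have dl: "real \<delta> \<le> 1" "real \<delta> \<ge> 0" unfolding \<delta>_def by auto
  have eq: "real c - s / (5 + s) * real n = gg s u / (5 + s) - real \<delta>"
    unfolding gg_def zc lu using spos by (simp add: field_simps)
  have "\<bar>gg s u / (5 + s)\<bar> \<le> \<bar>gg s u\<bar>"
    using spos by (simp add: abs_divide divide_le_eq) (simp add: mult.commute mult_le_cancel_left1 add_pos_nonneg)
  then have "\<bar>real c - s / (5 + s) * real n\<bar> \<le> K * real i + 1"
    unfolding eq using gg dl by linarith
  also have "\<dots> \<le> K * (log 2 (real n) + 1) + 1"
    using ilog K_def spos p_ge by (simp add: mult_left_mono)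
  finally have A: "\<bar>real c - s / (5 + s) * real n\<bar> \<le> K * (log 2 (real n) + 1) + 1" .
  have "real c / real n - s / (5 + s) = (real c - s / (5 + s) * real n) / real n"
    using n by (simp add: field_simps)
  then have "\<bar>real c / real n - s / (5 + s)\<bar> = \<bar>real c - s / (5 + s) * real n\<bar> / real n"
    by (simp add: abs_divide)
  also have "\<dots> \<le> (K * (log 2 (real n) + 1) + 1) / real n"
    using A n by (simp add: divide_right_mono)
  finally show ?thesis unfolding c_def .
qed

lemma main: "(\<lambda>n. real (card (Pset (wprefix r n))) / real n) \<longlonglongrightarrow> (5*r - 2) / 3"
proof -
  define B where "B = (\<lambda>n::nat. (K * (log 2 (real n) + 1) + 1) / real n)"
  have B0: "B \<longlonglongrightarrow> 0" unfolding B_def by real_asymp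
  have ev: "eventually (\<lambda>n. \<bar>real (card (Pset (wprefix r n))) / real n - s / (5 + s)\<bar> \<le> B n) sequentially"
    unfolding B_def using eventually_ge_at_top[of 1] by eventually_elim (rule bound)
  have l1: "(\<lambda>n. s / (5 + s) - B n) \<longlonglongrightarrow> s / (5 + s)" using tendsto_diff[OF tendsto_const B0] by simp
  have l2: "(\<lambda>n. s / (5 + s) + B n) \<longlonglongrightarrow> s / (5 + s)" using tendsto_add[OF tendsto_const B0] by simp
  have "(\<lambda>n. real (card (Pset (wprefix r n))) / real n) \<longlonglongrightarrow> s / (5 + s)"
    by (rule tendsto_sandwich[OF _ _ l1 l2]) (use ev in \<open>auto elim!: eventually_mono simp: abs_le_iff\<close>)
  then show ?thesis unfolding d_eq .
qed

end

theorem lemma4p15: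
  fixes r :: real
  assumes "2/5 < r" and "r < 1"
  shows "(\<lambda>n. real (card (Pset (wprefix r n))) / real n) \<longlonglongrightarrow> (5*r - 2) / 3"
proof -
  interpret R r using assms by unfold_locales
  show ?thesis by (rule main)
qed


end
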